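(* The variety $Z_{Horn}$ is the vanishing locus (in $W$) of the polynomial $s(X)=\det(H\circ X)$, where $\circ$ denotes the Hadamard (entrywise) product.
   Context: $H$ is the Horn matrix \[H=\begin{pmatrix} 1 & -1 &1& 1& -1 \\ -1 & 1& -1 &1& 1\\ 1 & -1 & 1 & -1 & 1\\ 1 & 1& -1&1& -1\\ -1&1&1&-1&1\end{pmatrix}.\] $W$ is the space of $5\times 5$ matrices of the form \[X=\begin{pmatrix} y_{11}& 0&0& y_{41}& y_{51} \\ y_{12} & y_{22}& 0 &0& y_{52}\\ y_{13 }& y_{23}& y_{33} & 0& 0\\ 0 & y_{24}& y_{34}&y_{44}& 0\\ 0&0&y_{35}&y_{45}& y_{55}\end{pmatrix}.\] $Z_{Horn}\subset W$ is the set of all matrices $DB$ where $D$ is a diagonal matrix with positive diagonal entries and \[B = \begin{pmatrix} 1& 0&0& y_4& y_5+1 \\ y_1+1 & 1& 0 &0& y_5\\ y_1 & y_2+1 & 1 & 0& 0\\ 0 & y_2& y_3+1&1& 0\\ 0&0&y_3&y_4+1&1\end{pmatrix}\operatorname{diag}(z_1,\dots,z_5)\] with $y_1,\dots,y_5,z_1,\dots,z_5$ positive reals; it is regarded as a hypersurface (variety) in $W$. *)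

theory Defs
  imports "Jordan_Normal_Form.Determinant"
begin

text \<open>Matrices are 5x5 real matrices of type real mat (Jordan_Normal_Form), indexed
  0-based: entry (i,j) here is entry (i+1,j+1) of the paper.\<close>

definition Horn :: "real mat" where
  "Horn = mat_of_rows_list 5
     [[ 1, -1,  1,  1, -1],
      [-1,  1, -1,  1,  1],
      [ 1, -1,  1, -1,  1],
      [ 1,  1, -1,  1, -1],
      [-1,  1,  1, -1,  1]]"

definition hadamard :: "real mat \<Rightarrow> real mat \<Rightarrow> real mat" where
  "hadamard A B = mat (dim_row A) (dim_col A) (\<lambda>(i,j). A $$ (i,j) * B $$ (i,j))"

text \<open>The linear space W: 5x5 matrices vanishing at the positions
  (1,2),(1,3),(2,3),(2,4),(3,4),(3,5),(4,5),(4,1),(5,1),(5,2).\<close>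
definition inW :: "real mat \<Rightarrow> bool" where
  "inW X \<longleftrightarrow> X \<in> carrier_mat 5 5 \<and>
     (\<forall>i<5. \<forall>j<5. (j + 5 - i) mod 5 \<in> {1,2} \<longrightarrow> X $$ (i,j) = 0)"

definition W :: "real mat set" where
  "W = {X. inW X}"

definition diag5 :: "(nat \<Rightarrow> real) \<Rightarrow> real mat" where
  "diag5 d = mat 5 5 (\<lambda>(i,j). if i = j then d i else 0)"

text \<open>The matrix B(y,z); y k and z k stand for y_{k+1}, z_{k+1}.\<close>
definition Bmat :: "(nat \<Rightarrow> real) \<Rightarrow> (nat \<Rightarrow> real) \<Rightarrow> real mat" where
  "Bmat y z = mat_of_rows_list 5
     [[1,         0,         0,         y 3,       y 4 + 1],
      [y 0 + 1,   1,         0,         0,         y 4],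
      [y 0,       y 1 + 1,   1,         0,         0],
      [0,         y 1,       y 2 + 1,   1,         0],
      [0,         0,         y 2,       y 3 + 1,   1]] * diag5 z"

definition Z_Horn :: "real mat set" where
  "Z_Horn = {diag5 d * Bmat y z | d y z.
               (\<forall>k<5. d k > 0) \<and> (\<forall>k<5. y k > 0) \<and> (\<forall>k<5. z k > 0)}"

inductive_set poly_fun :: "(real mat \<Rightarrow> real) set" where
  const: "(\<lambda>X. c) \<in> poly_fun"
| entry: "i < 5 \<Longrightarrow> j < 5 \<Longrightarrow> (\<lambda>X. X $$ (i,j)) \<in> poly_fun"
| add: "p \<in> poly_fun \<Longrightarrow> q \<in> poly_fun \<Longrightarrow> (\<lambda>X. p X + q X) \<in> poly_fun"
| mult: "p \<in> poly_fun \<Longrightarrow> q \<in> poly_fun \<Longrightarrow> (\<lambda>X. p X * q X) \<in> poly_fun"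

definition zariski_closed :: "real mat set \<Rightarrow> bool" where
  "zariski_closed C \<longleftrightarrow>
     (\<exists>P \<subseteq> poly_fun. C = {X \<in> carrier_mat 5 5. \<forall>p\<in>P. p X = 0})"

definition zariski_closure :: "real mat set \<Rightarrow> real mat set" where
  "zariski_closure S = \<Inter> {C. zariski_closed C \<and> S \<subseteq> C}"

end

theory Submission
  imports Defs
begin
definition s1 :: "nat \<Rightarrow> nat" where "s1 j = (j+1) mod 5"
definition s2 :: "nat \<Rightarrow> nat" where "s2 j = (j+2) mod 5"
definition Xof :: "(nat\<Rightarrow>real) \<Rightarrow> (nat\<Rightarrow>real) \<Rightarrow> (nat\<Rightarrow>real) \<Rightarrow> real mat" where
 "Xof a b c = mat 5 5 (\<lambda>(i,j). if i = j then a j else if i = s1 j then b j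
     else if i = s2 j then c j else 0)"
lemma s_vals[simp]: "s1 0 = Suc 0" "s1 (Suc 0) = 2" "s1 2 = 3" "s1 3 = 4" "s1 4 = 0"
  "s2 0 = 2" "s2 (Suc 0) = 3" "s2 2 = 4" "s2 3 = 0" "s2 4 = Suc 0" by (simp_all add: s1_def s2_def)
lemma all5: "(\<forall>i<(5::nat). P i) \<longleftrightarrow> P 0 \<and> P 1 \<and> P 2 \<and> P 3 \<and> P 4"
  by (auto simp: less_Suc_eq numeral_eq_Suc)
lemma cases5: "(i::nat) < 5 \<Longrightarrow> P 0 \<Longrightarrow> P 1 \<Longrightarrow> P 2 \<Longrightarrow> P 3 \<Longrightarrow> P 4 \<Longrightarrow> P i"
  by (auto simp: less_Suc_eq numeral_eq_Suc)
lemma less5: "(i::nat) < 5 \<longleftrightarrow> i = 0 \<or> i = 1 \<or> i = 2 \<or> i = 3 \<or> i = 4" by auto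
lemma sum5: "(\<Sum>i\<in>{0..<(5::nat)}. f i) = f 0 + f 1 + f 2 + f 3 + f 4"
  by (simp add: numeral_eq_Suc atLeast0LessThan lessThan_Suc algebra_simps)

lemma diag_left: assumes "M \<in> carrier_mat 5 5" "i < 5" "j < 5"
  shows "(diag5 d * M) $$ (i,j) = d i * M $$ (i,j)"
  proof -
  have e: "\<And>P x (y::real). (if P then x else 0) * y = (if P then x*y else 0)" by simp
  show ?thesis using assms by (simp add: diag5_def scalar_prod_def e sum.delta)
qed
lemma diag_right: assumes "M \<in> carrier_mat 5 5" "i < 5" "j < 5"
  shows "(M * diag5 d) $$ (i,j) = M $$ (i,j) * d j"
  proof -
  have e: "\<And>P x (y::real). y * (if P then x else 0) = (if P then y*x else 0)" by simp
  show ?thesis using assms by (simp add: diag5_def scalar_prod_def e sum.delta')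
qed

definition L0 :: "(nat \<Rightarrow> real) \<Rightarrow> real mat" where
 "L0 y = mat_of_rows_list 5
     [[1,         0,         0,         y 3,       y 4 + 1],
      [y 0 + 1,   1,         0,         0,         y 4],
      [y 0,       y 1 + 1,   1,         0,         0],
      [0,         y 1,       y 2 + 1,   1,         0],
      [0,         0,         y 2,       y 3 + 1,   1]]"
lemma L0_carrier[simp]: "L0 y \<in> carrier_mat 5 5" unfolding L0_def mat_of_rows_list_def by (simp add: numeral_eq_Suc del: mat_carrier) (rule mat_carrier)
lemma L0_entries[simp]: "L0 y $$ (0,0) = 1" "L0 y $$ (0,Suc 0) = 0" "L0 y $$ (0,2) = 0" "L0 y $$ (0,3) = y 3" "L0 y $$ (0,4) = y 4 + 1" "L0 y $$ (Suc 0,0) = y 0 + 1" "L0 y $$ (Suc 0,Suc 0) = 1" "L0 y $$ (Suc 0,2) = 0" "L0 y $$ (Suc 0,3) = 0" "L0 y $$ (Suc 0,4) = y 4" "L0 y $$ (2,0) = y 0" "L0 y $$ (2,Suc 0) = y 1 + 1" "L0 y $$ (2,2) = 1" "L0 y $$ (2,3) = 0" "L0 y $$ (2,4) = 0" "L0 y $$ (3,0) = 0" "L0 y $$ (3,Suc 0) = y 1" "L0 y $$ (3,2) = y 2 + 1" "L0 y $$ (3,3) = 1" "L0 y $$ (3,4) = 0" "L0 y $$ (4,0) = 0" "L0 y $$ (4,Suc 0) = 0" "L0 y $$ (4,2) = y 2" "L0 y $$ (4,3) = y 3 + 1" "L0 y $$ (4,4) = 1"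
  by (simp_all add: L0_def mat_of_rows_list_def)
lemma Bmat_L0: "Bmat y z = L0 y * diag5 z" unfolding Bmat_def L0_def ..
lemma diag5_carrier[simp]: "diag5 d \<in> carrier_mat 5 5" by (simp add: diag5_def)

lemma Xof_entries[simp]: "Xof a b c $$ (0,0) = a 0" "Xof a b c $$ (0,Suc 0) = 0" "Xof a b c $$ (0,2) = 0" "Xof a b c $$ (0,3) = c 3" "Xof a b c $$ (0,4) = b 4" "Xof a b c $$ (Suc 0,0) = b 0" "Xof a b c $$ (Suc 0,Suc 0) = a (Suc 0)" "Xof a b c $$ (Suc 0,2) = 0" "Xof a b c $$ (Suc 0,3) = 0" "Xof a b c $$ (Suc 0,4) = c 4" "Xof a b c $$ (2,0) = c 0" "Xof a b c $$ (2,Suc 0) = b (Suc 0)" "Xof a b c $$ (2,2) = a 2" "Xof a b c $$ (2,3) = 0" "Xof a b c $$ (2,4) = 0" "Xof a b c $$ (3,0) = 0" "Xof a b c $$ (3,Suc 0) = c (Suc 0)" "Xof a b c $$ (3,2) = b 2" "Xof a b c $$ (3,3) = a 3" "Xof a b c $$ (3,4) = 0" "Xof a b c $$ (4,0) = 0" "Xof a b c $$ (4,Suc 0) = 0" "Xof a b c $$ (4,2) = c 2" "Xof a b c $$ (4,3) = b 3" "Xof a b c $$ (4,4) = a 4"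
  by (simp_all add: Xof_def)

lemma Zform: "diag5 d * Bmat y z = Xof (\<lambda>j. d j * z j) (\<lambda>j. d (s1 j) * (y j + 1) * z j) (\<lambda>j. d (s2 j) * y j * z j)"
proof (rule eq_matI)
  fix i j assume "i < dim_row (Xof (\<lambda>j. d j * z j) (\<lambda>j. d (s1 j) * (y j + 1) * z j) (\<lambda>j. d (s2 j) * y j * z j))"
    "j < dim_col (Xof (\<lambda>j. d j * z j) (\<lambda>j. d (s1 j) * (y j + 1) * z j) (\<lambda>j. d (s2 j) * y j * z j))"
  hence ij: "i < 5" "j < 5" by (auto simp: Xof_def)
  have "(diag5 d * Bmat y z) $$ (i,j) = d i * (L0 y $$ (i,j) * z j)"
    unfolding Bmat_L0 using ij diag_left[of "L0 y * diag5 z" i j d] diag_right[of "L0 y" i j z] mult_carrier_mat[OF L0_carrier diag5_carrier] by simp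
  show "(diag5 d * Bmat y z) $$ (i,j) = Xof (\<lambda>j. d j * z j) (\<lambda>j. d (s1 j) * (y j + 1) * z j) (\<lambda>j. d (s2 j) * y j * z j) $$ (i,j)"
  proof -
    have "\<forall>i<5. \<forall>j<5. d i * (L0 y $$ (i,j) * z j) = Xof (\<lambda>j. d j * z j) (\<lambda>j. d (s1 j) * (y j + 1) * z j) (\<lambda>j. d (s2 j) * y j * z j) $$ (i,j)"
      by (simp only: all5) simp
    thus ?thesis using ij \<open>(diag5 d * Bmat y z) $$ (i,j) = d i * (L0 y $$ (i,j) * z j)\<close> by simp
  qed
qed (simp_all add: Bmat_L0 diag5_def Xof_def)

lemma s_less[simp]: "s1 j < 5" "s2 j < 5" by (simp_all add: s1_def s2_def)

lemma Xof_carrier[simp]: "Xof a b c \<in> carrier_mat 5 5" by (simp add: Xof_def)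

lemma inW_Xof: "inW (Xof a b c)"
  unfolding inW_def Xof_def by (simp only: all5) (simp add: s1_def s2_def)

definition ceq :: "(nat\<Rightarrow>real) \<Rightarrow> (nat\<Rightarrow>real) \<Rightarrow> (nat\<Rightarrow>real) \<Rightarrow> (nat\<Rightarrow>real) \<Rightarrow> nat \<Rightarrow> bool" where
 "ceq a b c e j \<longleftrightarrow> e j * a j - e (s1 j) * b j + e (s2 j) * c j = 0"

lemma Horn_dims[simp]: "dim_row Horn = 5" "dim_col Horn = 5" by (simp_all add: Horn_def mat_of_rows_list_def)

lemma had_carrier[simp]: "hadamard Horn X \<in> carrier_mat 5 5"
  by (simp add: hadamard_def)

lemma had_dims[simp]: "dim_row (hadamard Horn X) = 5" "dim_col (hadamard Horn X) = 5"
  by (simp_all add: hadamard_def)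

lemma had_entry: "i < 5 \<Longrightarrow> j < 5 \<Longrightarrow> hadamard Horn X $$ (i,j) = Horn $$ (i,j) * X $$ (i,j)"
  by (simp add: hadamard_def)

lemma Horn_entries[simp]: "Horn $$ (0,0) = 1" "Horn $$ (0,Suc 0) = -1" "Horn $$ (0,2) = 1" "Horn $$ (0,3) = 1" "Horn $$ (0,4) = -1" "Horn $$ (Suc 0,0) = -1" "Horn $$ (Suc 0,Suc 0) = 1" "Horn $$ (Suc 0,2) = -1" "Horn $$ (Suc 0,3) = 1" "Horn $$ (Suc 0,4) = 1" "Horn $$ (2,0) = 1" "Horn $$ (2,Suc 0) = -1" "Horn $$ (2,2) = 1" "Horn $$ (2,3) = -1" "Horn $$ (2,4) = 1" "Horn $$ (3,0) = 1" "Horn $$ (3,Suc 0) = 1" "Horn $$ (3,2) = -1" "Horn $$ (3,3) = 1" "Horn $$ (3,4) = -1" "Horn $$ (4,0) = -1" "Horn $$ (4,Suc 0) = 1" "Horn $$ (4,2) = 1" "Horn $$ (4,3) = -1" "Horn $$ (4,4) = 1"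
  by (simp_all add: Horn_def mat_of_rows_list_def)
lemma colsum: assumes "j < 5"
  shows "(\<Sum>i\<in>{0..<5}. hadamard Horn (Xof a b c) $$ (i,j) * e i) = e j * a j - e (s1 j) * b j + e (s2 j) * c j"
  unfolding sum5 using assms by (rule cases5) (simp_all add: had_entry)

lemma tmv: assumes "A \<in> carrier_mat 5 5" "v \<in> carrier_vec 5" "j < 5"
  shows "(transpose_mat A *\<^sub>v v) $ j = (\<Sum>i\<in>{0..<5}. A$$(i,j) * v$i)"
  using assms by (auto simp: scalar_prod_def intro!: sum.cong)

lemma det_Xof: "det (hadamard Horn (Xof a b c)) = 0 \<longleftrightarrow> (\<exists>e. (\<exists>k<5. e k \<noteq> 0) \<and> (\<forall>j<5. ceq a b c e j))"
proof -
  let ?M = "hadamard Horn (Xof a b c)"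
  have tc: "transpose_mat ?M \<in> carrier_mat 5 5" by simp
  have eq1: "det ?M = det (transpose_mat ?M)" using det_transpose[of ?M 5] by simp
  have eq2: "(det ?M = 0) \<longleftrightarrow> (\<exists> v. v \<in> carrier_vec 5 \<and> v \<noteq> 0\<^sub>v 5 \<and> transpose_mat ?M *\<^sub>v v = 0\<^sub>v 5)"
    unfolding eq1 by (rule det_0_iff_vec_prod_zero_field[OF tc])
  have eq3: "(\<exists> v. v \<in> carrier_vec 5 \<and> v \<noteq> 0\<^sub>v 5 \<and> transpose_mat ?M *\<^sub>v v = 0\<^sub>v 5) \<longleftrightarrow> (\<exists>e. (\<exists>k<5. e k \<noteq> 0) \<and> (\<forall>j<5. ceq a b c e j))"
  proof
    assume "\<exists> v. v \<in> carrier_vec 5 \<and> v \<noteq> 0\<^sub>v 5 \<and> transpose_mat ?M *\<^sub>v v = 0\<^sub>v 5"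
    then obtain v where v: "v \<in> carrier_vec 5" "v \<noteq> 0\<^sub>v 5" "transpose_mat ?M *\<^sub>v v = 0\<^sub>v 5" by blast
    have "\<exists>k<5. v $ k \<noteq> 0" using v(1,2) by (auto simp: vec_eq_iff)
    moreover have "ceq a b c (\<lambda>k. v $ k) j" if j: "j < 5" for j
    proof -
      have "(\<Sum>i\<in>{0..<5}. ?M $$ (i,j) * v $ i) = (transpose_mat ?M *\<^sub>v v) $ j"
        by (rule tmv[symmetric]) (use j v(1) in auto)
      also have "\<dots> = 0" using v(3) j by simp
      finally have "(\<Sum>i\<in>{0..<5}. ?M $$ (i,j) * v $ i) = 0" .
      thus ?thesis using colsum[OF j, of a b c "\<lambda>k. v $ k"] by (simp add: ceq_def)
    qed
    ultimately show "\<exists>e. (\<exists>k<5. e k \<noteq> 0) \<and> (\<forall>j<5. ceq a b c e j)" by blast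
  next
    assume "\<exists>e. (\<exists>k<5. e k \<noteq> 0) \<and> (\<forall>j<5. ceq a b c e j)"
    then obtain e where e: "\<exists>k<5. e k \<noteq> 0" "\<forall>j<5. ceq a b c e j" by blast
    let ?v = "vec 5 e"
    have "?v \<noteq> 0\<^sub>v 5" using e(1) by (auto simp: vec_eq_iff)
    moreover have "transpose_mat ?M *\<^sub>v ?v = 0\<^sub>v 5"
    proof (rule eq_vecI)
      fix j assume "j < dim_vec (0\<^sub>v 5 :: real vec)"
      hence j: "j < 5" by simp
      have "(transpose_mat ?M *\<^sub>v ?v) $ j = (\<Sum>i\<in>{0..<5}. ?M $$ (i,j) * ?v $ i)" 
        by (rule tmv) (use j in auto)
      also have "\<dots> = (\<Sum>i\<in>{0..<5}. ?M $$ (i,j) * e i)" by (intro sum.cong) auto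
      also have "\<dots> = 0" using colsum[OF j, of a b c e] e(2) j by (simp add: ceq_def)
      finally show "(transpose_mat ?M *\<^sub>v ?v) $ j = 0\<^sub>v 5 $ j" using j by simp
    qed simp
    ultimately show "\<exists> v. v \<in> carrier_vec 5 \<and> v \<noteq> 0\<^sub>v 5 \<and> transpose_mat ?M *\<^sub>v v = 0\<^sub>v 5" 
      using vec_carrier[of 5 e] by blast
  qed
  show ?thesis by (rule trans[OF eq2 eq3])
qed


lemma pf_sum: assumes "finite S" "\<And>s. s \<in> S \<Longrightarrow> f s \<in> poly_fun"
  shows "(\<lambda>X. \<Sum>s\<in>S. f s X) \<in> poly_fun"
  using assms
proof (induction S rule: finite_induct)
  case empty then show ?case using poly_fun.const[of 0] by simp
next
  case (insert x F)
  have e: "(\<lambda>X. \<Sum>s\<in>insert x F. f s X) = (\<lambda>X. f x X + (\<Sum>s\<in>F. f s X))" using insert(1,2) by simp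
  have "f x \<in> poly_fun" using insert(4) by simp
  moreover have "(\<lambda>X. \<Sum>s\<in>F. f s X) \<in> poly_fun" using insert(3,4) by simp
  ultimately show ?case unfolding e using poly_fun.add by blast
qed

lemma pf_prod: assumes "finite S" "\<And>s. s \<in> S \<Longrightarrow> f s \<in> poly_fun"
  shows "(\<lambda>X. \<Prod>s\<in>S. f s X) \<in> poly_fun"
  using assms
proof (induction S rule: finite_induct)
  case empty then show ?case using poly_fun.const[of 1] by simp
next
  case (insert x F)
  have e: "(\<lambda>X. \<Prod>s\<in>insert x F. f s X) = (\<lambda>X. f x X * (\<Prod>s\<in>F. f s X))" using insert(1,2) by simp
  have "f x \<in> poly_fun" using insert(4) by simp
  moreover have "(\<lambda>X. \<Prod>s\<in>F. f s X) \<in> poly_fun" using insert(3,4) by simp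
  ultimately show ?case unfolding e using poly_fun.mult by blast
qed

lemma pf_cmult: "p \<in> poly_fun \<Longrightarrow> (\<lambda>X. c * p X) \<in> poly_fun"
  using poly_fun.mult[OF poly_fun.const[of c]] by blast

lemma det_had_eq: "det (hadamard Horn X) =
  (\<Sum>p\<in>{p. p permutes {0..<5}}. signof p * (\<Prod>i=0..<5. Horn $$ (i, p i) * X $$ (i, p i)))"
proof -
  have "det (hadamard Horn X) = (\<Sum>p\<in>{p. p permutes {0..<5}}. signof p * (\<Prod>i=0..<5. hadamard Horn X $$ (i, p i)))"
    by (rule det_def'[OF had_carrier])
  also have "\<dots> = (\<Sum>p\<in>{p. p permutes {0..<5}}. signof p * (\<Prod>i=0..<5. Horn $$ (i, p i) * X $$ (i, p i)))"
  proof (intro sum.cong refl arg_cong[where f="\<lambda>x. _ * x"] prod.cong)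
    fix p :: "nat \<Rightarrow> nat" and i :: nat assume p: "p \<in> {p. p permutes {0..<5}}" and i: "i \<in> {0..<5}"
    have "p i \<in> {0..<5}" using p i permutes_in_image[of p "{0..<5}" i] by auto
    then show "hadamard Horn X $$ (i, p i) = Horn $$ (i, p i) * X $$ (i, p i)"
      using i had_entry by auto
  qed
  finally show ?thesis .
qed

lemma det_poly: "(\<lambda>X. det (hadamard Horn X)) \<in> poly_fun"
proof -
  have fin: "finite {p. p permutes {0..<(5::nat)}}" by (rule finite_permutations) simp
  have "(\<lambda>X. \<Sum>p\<in>{p. p permutes {0..<5}}. signof p * (\<Prod>i=0..<5. Horn $$ (i, p i) * X $$ (i, p i))) \<in> poly_fun"
  proof (rule pf_sum[OF fin])
    fix p :: "nat \<Rightarrow> nat" assume p: "p \<in> {p. p permutes {0..<5}}"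
    have "(\<lambda>X. \<Prod>i=0..<5. Horn $$ (i, p i) * X $$ (i, p i)) \<in> poly_fun"
    proof (rule pf_prod)
      fix i assume i: "i \<in> {0..<(5::nat)}"
      have "p i \<in> {0..<5}" using p i permutes_in_image[of p "{0..<5}" i] by auto
      then have "(\<lambda>X. X $$ (i, p i)) \<in> poly_fun" using i poly_fun.entry by auto
      then show "(\<lambda>X. Horn $$ (i, p i) * X $$ (i, p i)) \<in> poly_fun" by (rule pf_cmult)
    qed simp
    then show "(\<lambda>X. signof p * (\<Prod>i=0..<5. Horn $$ (i, p i) * X $$ (i, p i))) \<in> poly_fun"
      by (rule pf_cmult)
  qed
  then show ?thesis unfolding det_had_eq .
qed

lemma RHS_closed: "zariski_closed {X \<in> W. det (hadamard Horn X) = 0}"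
proof -
  define P where "P = {(\<lambda>X. X $$ (i,j)) | i j. i<5 \<and> j<5 \<and> (j+5-i) mod 5 \<in> {1,2}} \<union> {\<lambda>X. det (hadamard Horn X)}"
  have "P \<subseteq> poly_fun" unfolding P_def using det_poly poly_fun.entry by auto
  moreover have "{X \<in> W. det (hadamard Horn X) = 0} = {X \<in> carrier_mat 5 5. \<forall>p\<in>P. p X = 0}"
    unfolding P_def W_def inW_def by auto
  ultimately show ?thesis unfolding zariski_closed_def by blast
qed

lemma ZH_sub: "Z_Horn \<subseteq> {X \<in> W. det (hadamard Horn X) = 0}"
proof
  fix X assume "X \<in> Z_Horn"
  then obtain d y z where X: "X = diag5 d * Bmat y z" and d: "\<forall>k<5. d k > 0"
    and y: "\<forall>k<5. y k > 0" and z: "\<forall>k<5. z k > 0" unfolding Z_Horn_def by blast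
  have X': "X = Xof (\<lambda>j. d j * z j) (\<lambda>j. d (s1 j) * (y j + 1) * z j) (\<lambda>j. d (s2 j) * y j * z j)"
    unfolding X Zform ..
  have "ceq (\<lambda>j. d j * z j) (\<lambda>j. d (s1 j) * (y j + 1) * z j) (\<lambda>j. d (s2 j) * y j * z j) (\<lambda>k. 1 / d k) j"
    if j: "j < 5" for j
  proof -
    have "d j \<noteq> 0" "d (s1 j) \<noteq> 0" "d (s2 j) \<noteq> 0" using d j s_less[of j] by (metis less_irrefl)+
    then show ?thesis unfolding ceq_def by (simp add: field_simps)
  qed
  moreover have "1 / d 0 \<noteq> 0" using d[rule_format, of 0] by simp
  ultimately have "\<exists>e. (\<exists>k<5. e k \<noteq> 0) \<and> (\<forall>j<5. ceq (\<lambda>j. d j * z j) (\<lambda>j. d (s1 j) * (y j + 1) * z j) (\<lambda>j. d (s2 j) * y j * z j) e j)"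
    by (intro exI[of _ "\<lambda>k. 1 / d k"] conjI exI[of _ 0]) auto
  then have "det (hadamard Horn X) = 0" unfolding X' det_Xof .
  then show "X \<in> {X \<in> W. det (hadamard Horn X) = 0}" using inW_Xof X' by (simp add: W_def)
qed

lemma closure_sub: "zariski_closure Z_Horn \<subseteq> {X \<in> W. det (hadamard Horn X) = 0}"
  unfolding zariski_closure_def using RHS_closed ZH_sub by blast

definition pf1 :: "(real \<Rightarrow> real) \<Rightarrow> bool" where "pf1 f \<longleftrightarrow> (\<exists>q. \<forall>t. f t = poly q t)"

lemma pf1_const[intro]: "pf1 (\<lambda>t. c)" unfolding pf1_def by (intro exI[of _ "[:c:]"]) simp
lemma pf1_id[intro]: "pf1 (\<lambda>t. t)" unfolding pf1_def by (intro exI[of _ "[:0,1:]"]) simp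
lemma pf1_add[intro]: "pf1 f \<Longrightarrow> pf1 g \<Longrightarrow> pf1 (\<lambda>t. f t + g t)"
  unfolding pf1_def by (metis poly_add)
lemma pf1_mult[intro]: "pf1 f \<Longrightarrow> pf1 g \<Longrightarrow> pf1 (\<lambda>t. f t * g t)"
  unfolding pf1_def by (metis poly_mult)
lemma pf1_diff[intro]: "pf1 f \<Longrightarrow> pf1 g \<Longrightarrow> pf1 (\<lambda>t. f t - g t)"
  unfolding pf1_def by (metis poly_diff)
lemma pf1_if: "pf1 f \<Longrightarrow> pf1 g \<Longrightarrow> pf1 (\<lambda>t. if P then f t else g t)" by (cases P) auto

lemma curve:
  assumes D: "zariski_closed D" and car: "\<And>t. A t \<in> carrier_mat 5 5"
    and ent: "\<And>i j. i<5 \<Longrightarrow> j<5 \<Longrightarrow> pf1 (\<lambda>t. A t $$ (i,j))"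
    and inD: "\<And>t. t > M \<Longrightarrow> A t \<in> D"
  shows "A t0 \<in> D"
proof -
  obtain P where P: "P \<subseteq> poly_fun" "D = {X \<in> carrier_mat 5 5. \<forall>p\<in>P. p X = 0}"
    using D unfolding zariski_closed_def by auto
  have pfp: "pf1 (\<lambda>t. p (A t))" if "p \<in> poly_fun" for p
    using that
  proof (induction rule: poly_fun.induct)
    case (const c) then show ?case by auto
  next
    case (entry i j) then show ?case using ent by auto
  next
    case (add p q) then show ?case by auto
  next
    case (mult p q) then show ?case by auto
  qed
  have "p (A t0) = 0" if p: "p \<in> P" for p
  proof -
    obtain q where q: "\<forall>t. p (A t) = poly q t" using pfp P p unfolding pf1_def by blast
    have "q = 0"
    proof (rule ccontr)
      assume "q \<noteq> 0"
      then have "finite {t. poly q t = 0}" by (rule poly_roots_finite)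
      moreover have "{M<..} \<subseteq> {t. poly q t = 0}"
      proof
        fix t assume "t \<in> {M<..}"
        hence "A t \<in> D" using inD by simp
        hence "p (A t) = 0" using P p by auto
        thus "t \<in> {t. poly q t = 0}" using q by simp
      qed
      ultimately show False using infinite_Ioi[of M] finite_subset by blast
    qed
    thus ?thesis using q by simp
  qed
  thus ?thesis using car P by auto
qed


lemma pf1_divc[intro]: "pf1 f \<Longrightarrow> pf1 (\<lambda>t. f t / c)"
  unfolding pf1_def by (metis (no_types) divide_inverse mult.commute poly_smult)

lemma Xof_cong: "(\<And>j. j < 5 \<Longrightarrow> a j = a' j \<and> b j = b' j \<and> c j = c' j) \<Longrightarrow> Xof a b c = Xof a' b' c'"
  unfolding Xof_def by (rule eq_matI) auto

lemma Xof_pf1: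
  assumes "\<And>j. pf1 (\<lambda>t. A t j)" "\<And>j. pf1 (\<lambda>t. B t j)" "\<And>j. pf1 (\<lambda>t. C t j)" "i < 5" "j < 5"
  shows "pf1 (\<lambda>t. Xof (A t) (B t) (C t) $$ (i,j))"
proof -
  have "pf1 (\<lambda>t. if i = j then A t j else if i = s1 j then B t j else if i = s2 j then C t j else 0)"
    using assms(1-3) by (intro pf1_if) auto
  then show ?thesis using assms(4,5) by (simp add: Xof_def)
qed

lemma good:
  assumes D: "zariski_closed D" "Z_Horn \<subseteq> D" and e: "\<forall>k<5. e k \<noteq> 0"
    and ce: "\<forall>j<5. ceq a b c e j"
  shows "Xof a b c \<in> D"
proof -
  define d where "d k = 1 / e k" for k
  define zz where "zz j = a j * e j" for j
  define cc where "cc j = c j * e (s2 j)" for j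
  define M where "M = (\<Sum>k<5. \<bar>d k\<bar> + \<bar>zz k\<bar> + \<bar>cc k\<bar>)"
  define A where "A t = Xof (\<lambda>j. (d j + t) * (zz j + t)) (\<lambda>j. (d (s1 j) + t) * ((zz j + t) + (cc j + t)))
      (\<lambda>j. (d (s2 j) + t) * (cc j + t))" for t
  have bnd: "\<bar>d k\<bar> \<le> M \<and> \<bar>zz k\<bar> \<le> M \<and> \<bar>cc k\<bar> \<le> M" if k: "k < 5" for k
  proof -
    have "\<bar>d k\<bar> + \<bar>zz k\<bar> + \<bar>cc k\<bar> \<le> M" unfolding M_def
      by (rule member_le_sum[of k "{..<5}" "\<lambda>k. \<bar>d k\<bar> + \<bar>zz k\<bar> + \<bar>cc k\<bar>"]) (use k in auto)
    then show ?thesis by auto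
  qed
  have inD: "A t \<in> D" if t: "t > M" for t
  proof -
    have pos: "d k + t > 0 \<and> zz k + t > 0 \<and> cc k + t > 0" if "k < 5" for k
      using bnd[OF that] t by (auto simp: abs_le_iff)
    define y where "y j = (cc j + t) / (zz j + t)" for j
    have "A t = diag5 (\<lambda>j. d j + t) * Bmat y (\<lambda>j. zz j + t)"
      unfolding Zform A_def
    proof (rule Xof_cong)
      fix j :: nat assume j: "j < 5"
      have "zz j + t \<noteq> 0" using pos[OF j] by auto
      then show "(d j + t) * (zz j + t) = (d j + t) * (zz j + t) \<and>
         (d (s1 j) + t) * ((zz j + t) + (cc j + t)) = (d (s1 j) + t) * (y j + 1) * (zz j + t) \<and>
         (d (s2 j) + t) * (cc j + t) = (d (s2 j) + t) * y j * (zz j + t)"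
        unfolding y_def by (simp add: field_simps)
    qed
    moreover have "(\<forall>k<5. d k + t > 0) \<and> (\<forall>k<5. y k > 0) \<and> (\<forall>k<5. zz k + t > 0)"
      using pos unfolding y_def by auto
    ultimately have "A t \<in> Z_Horn" unfolding Z_Horn_def by blast
    then show ?thesis using D(2) by blast
  qed
  have "A 0 \<in> D"
  proof (rule curve[OF D(1), of A M])
    show "A t \<in> carrier_mat 5 5" for t unfolding A_def by simp
    show "pf1 (\<lambda>t. A t $$ (i, j))" if "i < 5" "j < 5" for i j
      unfolding A_def by (rule Xof_pf1) (intro pf1_mult pf1_add pf1_const pf1_id | use that in simp)+
  qed (use inD in auto)
  moreover have "A 0 = Xof a b c"
    unfolding A_def
  proof (rule Xof_cong)
    fix j :: nat assume j: "j < 5"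
    have e0: "e j \<noteq> 0" "e (s1 j) \<noteq> 0" "e (s2 j) \<noteq> 0" using e j by auto
    have "e j * a j - e (s1 j) * b j + e (s2 j) * c j = 0" using ce j unfolding ceq_def by auto
    then have bj: "b j = (e j * a j + e (s2 j) * c j) / e (s1 j)" using e0 by (simp add: field_simps)
    show "(d j + 0) * (zz j + 0) = a j \<and> (d (s1 j) + 0) * ((zz j + 0) + (cc j + 0)) = b j \<and>
      (d (s2 j) + 0) * (cc j + 0) = c j"
      unfolding d_def zz_def cc_def bj using e0 by (simp add: field_simps)
  qed
  ultimately show ?thesis by simp
qed

definition zw :: "(nat \<Rightarrow> real) \<Rightarrow> nat \<Rightarrow> bool" where
  "zw e j \<longleftrightarrow> e j = 0 \<and> e (s1 j) = 0 \<and> e (s2 j) = 0"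

definition nrm :: "(nat \<Rightarrow> real) \<Rightarrow> nat \<Rightarrow> real" where
  "nrm e j = (e j)^2 + (e (s1 j))^2 + (e (s2 j))^2"

definition rr :: "(nat\<Rightarrow>real) \<Rightarrow> (nat\<Rightarrow>real) \<Rightarrow> (nat\<Rightarrow>real) \<Rightarrow> (nat\<Rightarrow>real) \<Rightarrow> nat \<Rightarrow> real" where
  "rr a b c F j = F j * a j - F (s1 j) * b j + F (s2 j) * c j"

definition aT :: "(nat\<Rightarrow>real) \<Rightarrow> (nat\<Rightarrow>real) \<Rightarrow> (nat\<Rightarrow>real) \<Rightarrow> (nat\<Rightarrow>real) \<Rightarrow> (nat\<Rightarrow>real) \<Rightarrow> real \<Rightarrow> nat \<Rightarrow> real" where
  "aT a b c e F t j = a j - (if zw e j then 0 else t * rr a b c F j * e j / nrm e j)"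
definition bT :: "(nat\<Rightarrow>real) \<Rightarrow> (nat\<Rightarrow>real) \<Rightarrow> (nat\<Rightarrow>real) \<Rightarrow> (nat\<Rightarrow>real) \<Rightarrow> (nat\<Rightarrow>real) \<Rightarrow> real \<Rightarrow> nat \<Rightarrow> real" where
  "bT a b c e F t j = b j + (if zw e j then 0 else t * rr a b c F j * e (s1 j) / nrm e j)"
definition cT :: "(nat\<Rightarrow>real) \<Rightarrow> (nat\<Rightarrow>real) \<Rightarrow> (nat\<Rightarrow>real) \<Rightarrow> (nat\<Rightarrow>real) \<Rightarrow> (nat\<Rightarrow>real) \<Rightarrow> real \<Rightarrow> nat \<Rightarrow> real" where
  "cT a b c e F t j = c j - (if zw e j then 0 else t * rr a b c F j * e (s2 j) / nrm e j)"

lemma kernel_ceq: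
  assumes ce: "ceq a b c e j" and supp: "\<forall>k<5. e k \<noteq> 0 \<longrightarrow> F k = 0"
    and zwc: "zw e j \<longrightarrow> ceq a b c F j" and j: "j < 5"
  shows "ceq (aT a b c e F t) (bT a b c e F t) (cT a b c e F t) (\<lambda>k. e k + t * F k) j"
proof (cases "zw e j")
  case True
  then show ?thesis using zwc unfolding ceq_def aT_def bT_def cT_def zw_def
    by (simp add: algebra_simps) (metis mult_zero_right distrib_left mult.assoc mult.left_commute)
next
  case False
  define n where "n = nrm e j"
  define r where "r = rr a b c F j"
  have n0: "n \<noteq> 0" using False unfolding n_def nrm_def zw_def
    by (metis add_nonneg_nonneg sum_power2_eq_zero_iff zero_le_power2 add_nonneg_eq_0_iff)
  have fe: "F j * e j = 0" "F (s1 j) * e (s1 j) = 0" "F (s2 j) * e (s2 j) = 0"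
    using supp j by (auto simp del: s_less) (use s_less in auto)
  have c0: "e j * a j - e (s1 j) * b j + e (s2 j) * c j = 0" using ce unfolding ceq_def .
  have nn: "n = e j * e j + e (s1 j) * e (s1 j) + e (s2 j) * e (s2 j)" unfolding n_def nrm_def by (simp add: power2_eq_square)
  have "(e j + t * F j) * (a j - t * r * e j / n) - (e (s1 j) + t * F (s1 j)) * (b j + t * r * e (s1 j) / n)
     + (e (s2 j) + t * F (s2 j)) * (c j - t * r * e (s2 j) / n)
     = (e j * a j - e (s1 j) * b j + e (s2 j) * c j) + t * r
       - t * r / n * (e j * e j + e (s1 j) * e (s1 j) + e (s2 j) * e (s2 j))
       - t * t * r / n * (F j * e j + F (s1 j) * e (s1 j) + F (s2 j) * e (s2 j))"
    unfolding r_def rr_def by (simp add: algebra_simps add_divide_distrib diff_divide_distrib)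
  also have "\<dots> = 0" unfolding c0 fe nn[symmetric] using n0 by simp
  finally show ?thesis using False unfolding ceq_def aT_def bT_def cT_def n_def r_def by simp
qed

lemma kernel_pf1: "i < 5 \<Longrightarrow> j < 5 \<Longrightarrow>
  pf1 (\<lambda>t. Xof (aT a b c e F t) (bT a b c e F t) (cT a b c e F t) $$ (i,j))"
  by (rule Xof_pf1; (unfold aT_def bT_def cT_def)?; (intro pf1_diff pf1_add pf1_if pf1_divc pf1_mult pf1_const pf1_id)?; simp)

lemma kernel_0: "Xof (aT a b c e F 0) (bT a b c e F 0) (cT a b c e F 0) = Xof a b c"
  by (rule Xof_cong) (simp add: aT_def bT_def cT_def)

lemma lemmaI:
  assumes D: "zariski_closed D" "Z_Horn \<subseteq> D" and ce: "\<forall>j<5. ceq a b c e j"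
    and nz: "\<forall>j<5. \<not> zw e j"
  shows "Xof a b c \<in> D"
proof -
  define F where "F k = (if e k = 0 then 1 else (0::real))" for k
  have "Xof (aT a b c e F 0) (bT a b c e F 0) (cT a b c e F 0) \<in> D"
  proof (rule curve[OF D(1), of _ 0])
    fix t :: real assume t: "t > 0"
    show "Xof (aT a b c e F t) (bT a b c e F t) (cT a b c e F t) \<in> D"
    proof (rule good[OF D])
      show "\<forall>k<5. e k + t * F k \<noteq> 0" using t unfolding F_def by auto
      have supp: "\<forall>k<5. e k \<noteq> 0 \<longrightarrow> F k = 0" by (simp add: F_def)
      show "\<forall>j<5. ceq (aT a b c e F t) (bT a b c e F t) (cT a b c e F t) (\<lambda>k. e k + t * F k) j"
        using ce nz supp by (auto intro!: kernel_ceq)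
    qed
  qed (auto intro: kernel_pf1)
  then show ?thesis unfolding kernel_0 .
qed

definition goodF where
  "goodF a b c e F \<longleftrightarrow> (\<forall>k<5. e k \<noteq> 0 \<longrightarrow> F k = 0) \<and> (\<forall>j<5. zw e j \<longrightarrow> ceq a b c F j \<and> \<not> zw F j)"

lemma lemmaII:
  assumes D: "zariski_closed D" "Z_Horn \<subseteq> D" and ce: "\<forall>j<5. ceq a b c e j"
    and F: "goodF a b c e F"
  shows "Xof a b c \<in> D"
proof -
  have "Xof (aT a b c e F 0) (bT a b c e F 0) (cT a b c e F 0) \<in> D"
  proof (rule curve[OF D(1), of _ 0])
    fix t :: real assume t: "t > 0"
    show "Xof (aT a b c e F t) (bT a b c e F t) (cT a b c e F t) \<in> D"
    proof (rule lemmaI[OF D])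
      show "\<forall>j<5. ceq (aT a b c e F t) (bT a b c e F t) (cT a b c e F t) (\<lambda>k. e k + t * F k) j"
        using ce F by (auto intro!: kernel_ceq simp: goodF_def)
      show "\<forall>j<5. \<not> zw (\<lambda>k. e k + t * F k) j"
      proof (intro allI impI)
        fix j :: nat assume j: "j < 5"
        show "\<not> zw (\<lambda>k. e k + t * F k) j"
        proof (cases "zw e j")
          case True
          then have "\<not> zw F j" using F j unfolding goodF_def by auto
          then show ?thesis using True t unfolding zw_def by auto
        next
          case False
          have s: "s1 j < 5" "s2 j < 5" by simp_all
          show ?thesis using False F j s unfolding zw_def goodF_def by auto
        qed
      qed
    qed
  qed (auto intro: kernel_pf1)
  then show ?thesis unfolding kernel_0 .
qed


lemma win1: "\<exists>x y z. x*A - y*B + z*C = (0::real) \<and> \<not>(x = 0 \<and> y = 0 \<and> z = 0)"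
proof (cases "A = 0")
  case True then show ?thesis by (intro exI[of _ 1] exI[of _ 0]) simp
next
  case False then show ?thesis by (intro exI[of _ "B/A"] exI[of _ 1] exI[of _ 0]) simp
qed

lemma win2: "\<exists>x1 x2 x3 x4. x1*A1 - x2*B1 + x3*C1 = (0::real) \<and> x2*A2 - x3*B2 + x4*C2 = 0 \<and>
   \<not>(x1=0\<and>x2=0\<and>x3=0) \<and> \<not>(x2=0\<and>x3=0\<and>x4=0)"
proof (cases "A1 = 0")
  case A: True
  show ?thesis
  proof (cases "C2 = 0")
    case True
    then show ?thesis using A by (intro exI[of _ 1] exI[of _ 0] exI[of _ 1]) simp
  next
    case C: False
    obtain p q :: real where pq: "p * B1 = q * C1" "\<not>(p = 0 \<and> q = 0)"
    proof (cases "B1 = 0 \<and> C1 = 0")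
      case True then show ?thesis using that[of 1 0] by simp
    next
      case False then show ?thesis using that[of C1 B1] by (auto simp: mult.commute)
    qed
    show ?thesis using A C pq
      by (intro exI[of _ 0] exI[of _ p] exI[of _ q] exI[of _ "-(p*A2 - q*B2)/C2"]) (auto simp: field_simps)
  qed
next
  case A: False
  show ?thesis
  proof (cases "C2 = 0")
    case C: True
    obtain p q :: real where pq: "p * A2 = q * B2" "\<not>(p = 0 \<and> q = 0)"
    proof (cases "A2 = 0 \<and> B2 = 0")
      case True then show ?thesis using that[of 1 0] by simp
    next
      case False then show ?thesis using that[of B2 A2] by (auto simp: mult.commute)
    qed
    show ?thesis using A C pq
      by (intro exI[of _ "(p*B1 - q*C1)/A1"] exI[of _ p] exI[of _ q] exI[of _ 0]) (auto simp: field_simps)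
  next
    case C: False
    show ?thesis using A C
      by (intro exI[of _ "B1/A1"] exI[of _ 1] exI[of _ 0] exI[of _ "-A2/C2"]) (auto simp: field_simps)
  qed
qed

lemma pair_case:
  assumes zwq: "\<forall>j<5. zw e j \<longrightarrow> j = qa" and s: "s1 qa = qb" "s2 qa = qc"
    and supp: "\<forall>k<5. e k \<noteq> 0 \<longrightarrow> k \<noteq> qa \<and> k \<noteq> qb \<and> k \<noteq> qc"
    and d: "qa \<noteq> qb" "qa \<noteq> qc" "qb \<noteq> qc"
  shows "\<exists>F. goodF a b c e F"
proof -
  obtain x y z where xyz: "x * a qa - y * b qa + z * c qa = 0" "\<not>(x = 0 \<and> y = 0 \<and> z = 0)"
    using win1 by blast
  define F where "F k = (if k = qa then x else if k = qb then y else if k = qc then z else 0)" for k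
  have "goodF a b c e F"
    unfolding goodF_def
  proof (intro conjI allI impI)
    fix k assume "k < 5" "e k \<noteq> 0" then show "F k = 0" using supp unfolding F_def by simp
  next
    fix j assume "j < 5" "zw e j"
    then have j: "j = qa" using zwq by auto
    have Fv: "F qa = x" "F qb = y" "F qc = z" using d by (simp_all add: F_def)
    show "ceq a b c F j" unfolding j ceq_def s Fv using xyz(1) .
    show "\<not> zw F j" unfolding j zw_def s Fv using xyz(2) .
  qed
  then show ?thesis by blast
qed

lemma single_case:
  assumes zwq: "\<forall>j<5. zw e j \<longrightarrow> j = qa \<or> j = qb" and s: "s1 qa = qb" "s2 qa = qc" "s1 qb = qc" "s2 qb = qd"
    and supp: "\<forall>k<5. e k \<noteq> 0 \<longrightarrow> k \<noteq> qa \<and> k \<noteq> qb \<and> k \<noteq> qc \<and> k \<noteq> qd"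
    and d: "qa \<noteq> qb" "qa \<noteq> qc" "qa \<noteq> qd" "qb \<noteq> qc" "qb \<noteq> qd" "qc \<noteq> qd"
  shows "\<exists>F. goodF a b c e F"
proof -
  obtain x1 x2 x3 x4 where xs: "x1 * a qa - x2 * b qa + x3 * c qa = 0" "x2 * a qb - x3 * b qb + x4 * c qb = 0"
     "\<not>(x1=0\<and>x2=0\<and>x3=0)" "\<not>(x2=0\<and>x3=0\<and>x4=0)"
    using win2 by blast
  define F where "F k = (if k = qa then x1 else if k = qb then x2 else if k = qc then x3 else if k = qd then x4 else 0)" for k
  have "goodF a b c e F"
    unfolding goodF_def
  proof (intro conjI allI impI)
    fix k assume "k < 5" "e k \<noteq> 0" then show "F k = 0" using supp unfolding F_def by simp
  next
    fix j assume "j < 5" "zw e j"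
    then have j: "j = qa \<or> j = qb" using zwq by auto
    have Fv: "F qa = x1" "F qb = x2" "F qc = x3" "F qd = x4" using d by (simp_all add: F_def)
    show "ceq a b c F j" using j
    proof
      assume "j = qa" then show ?thesis unfolding ceq_def using xs(1) s Fv by simp
    next
      assume "j = qb" then show ?thesis unfolding ceq_def using xs(2) s Fv by simp
    qed
    show "\<not> zw F j" using j
    proof
      assume "j = qa" then show ?thesis unfolding zw_def using xs(3) s Fv by simp
    next
      assume "j = qb" then show ?thesis unfolding zw_def using xs(4) s Fv by simp
    qed
  qed
  then show ?thesis by blast
qed



lemma W_eq_Xof: assumes "inW X"
  shows "X = Xof (\<lambda>j. X$$(j,j)) (\<lambda>j. X$$(s1 j,j)) (\<lambda>j. X$$(s2 j,j))"
proof (rule eq_matI)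
  from assms have X: "X \<in> carrier_mat 5 5" and z: "\<forall>i<5. \<forall>j<5. (j + 5 - i) mod 5 \<in> {1,2} \<longrightarrow> X $$ (i,j) = 0"
    by (auto simp: inW_def)
  have all: "\<forall>i<5. \<forall>j<5. X $$ (i,j) = Xof (\<lambda>j. X$$(j,j)) (\<lambda>j. X$$(s1 j,j)) (\<lambda>j. X$$(s2 j,j)) $$ (i,j)"
    using z unfolding all5 by simp
  fix i j assume "i < dim_row (Xof (\<lambda>j. X$$(j,j)) (\<lambda>j. X$$(s1 j,j)) (\<lambda>j. X$$(s2 j,j)))"
    "j < dim_col (Xof (\<lambda>j. X$$(j,j)) (\<lambda>j. X$$(s1 j,j)) (\<lambda>j. X$$(s2 j,j)))"
  hence ij: "i < 5" "j < 5" by (auto simp: Xof_def)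
  show "X $$ (i,j) = Xof (\<lambda>j. X$$(j,j)) (\<lambda>j. X$$(s1 j,j)) (\<lambda>j. X$$(s2 j,j)) $$ (i,j)"
    using ij all by simp
qed (use assms in \<open>auto simp: inW_def Xof_def\<close>)

lemma ex5: "(\<exists>i<(5::nat). P i) \<longleftrightarrow> P 0 \<or> P 1 \<or> P 2 \<or> P 3 \<or> P 4"
  by (auto simp: less_Suc_eq numeral_eq_Suc)

lemma exF: assumes "\<exists>k<5. e k \<noteq> 0" shows "\<exists>F. goodF a b c e F"
proof (cases "\<exists>j<5. zw e j")
  case False then show ?thesis by (intro exI[of _ "\<lambda>_. 0"]) (auto simp: goodF_def)
next
  case True
  then obtain j0 where j0: "j0 < 5" "zw e j0" by blast
  have key: "\<forall>j0<5. zw e j0 \<longrightarrow> (\<exists>k<5. e k \<noteq> 0) \<longrightarrow> (\<exists>F. goodF a b c e F)"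
  proof (simp only: all5, intro conjI impI)
    assume z: "zw e 0" and nz: "\<exists>k<5. e k \<noteq> 0"
    have ez: "e (0) = 0" "e (Suc 0) = 0" "e (2) = 0" using z by (simp_all add: zw_def)
    consider (p) "e (3) \<noteq> 0" "e (4) \<noteq> 0" | (s3) "e (3) = 0" "e (4) \<noteq> 0"
      | (s4) "e (3) \<noteq> 0" "e (4) = 0" | (n) "e (3) = 0" "e (4) = 0" by blast
    then show "\<exists>F. goodF a b c e F"
    proof cases
      case p show ?thesis
        by (rule pair_case[where qa="0" and qb="Suc 0" and qc="2"]) (use ez p in \<open>simp_all add: all5 zw_def\<close>)
    next
      case s3 show ?thesis
        by (rule single_case[where qa="0" and qb="Suc 0" and qc="2" and qd="3"]) (use ez s3 in \<open>simp_all add: all5 zw_def\<close>)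
    next
      case s4 show ?thesis
        by (rule single_case[where qa="4" and qb="0" and qc="Suc 0" and qd="2"]) (use ez s4 in \<open>simp_all add: all5 zw_def\<close>)
    next
      case n then show ?thesis using nz ez by (simp add: ex5)
    qed
  next
    assume z: "zw e 1" and nz: "\<exists>k<5. e k \<noteq> 0"
    have ez: "e (Suc 0) = 0" "e (2) = 0" "e (3) = 0" using z by (simp_all add: zw_def)
    consider (p) "e (4) \<noteq> 0" "e (0) \<noteq> 0" | (s3) "e (4) = 0" "e (0) \<noteq> 0"
      | (s4) "e (4) \<noteq> 0" "e (0) = 0" | (n) "e (4) = 0" "e (0) = 0" by blast
    then show "\<exists>F. goodF a b c e F"
    proof cases
      case p show ?thesis
        by (rule pair_case[where qa="Suc 0" and qb="2" and qc="3"]) (use ez p in \<open>simp_all add: all5 zw_def\<close>)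
    next
      case s3 show ?thesis
        by (rule single_case[where qa="Suc 0" and qb="2" and qc="3" and qd="4"]) (use ez s3 in \<open>simp_all add: all5 zw_def\<close>)
    next
      case s4 show ?thesis
        by (rule single_case[where qa="0" and qb="Suc 0" and qc="2" and qd="3"]) (use ez s4 in \<open>simp_all add: all5 zw_def\<close>)
    next
      case n then show ?thesis using nz ez by (simp add: ex5)
    qed
  next
    assume z: "zw e 2" and nz: "\<exists>k<5. e k \<noteq> 0"
    have ez: "e (2) = 0" "e (3) = 0" "e (4) = 0" using z by (simp_all add: zw_def)
    consider (p) "e (0) \<noteq> 0" "e (Suc 0) \<noteq> 0" | (s3) "e (0) = 0" "e (Suc 0) \<noteq> 0"
      | (s4) "e (0) \<noteq> 0" "e (Suc 0) = 0" | (n) "e (0) = 0" "e (Suc 0) = 0" by blast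
    then show "\<exists>F. goodF a b c e F"
    proof cases
      case p show ?thesis
        by (rule pair_case[where qa="2" and qb="3" and qc="4"]) (use ez p in \<open>simp_all add: all5 zw_def\<close>)
    next
      case s3 show ?thesis
        by (rule single_case[where qa="2" and qb="3" and qc="4" and qd="0"]) (use ez s3 in \<open>simp_all add: all5 zw_def\<close>)
    next
      case s4 show ?thesis
        by (rule single_case[where qa="Suc 0" and qb="2" and qc="3" and qd="4"]) (use ez s4 in \<open>simp_all add: all5 zw_def\<close>)
    next
      case n then show ?thesis using nz ez by (simp add: ex5)
    qed
  next
    assume z: "zw e 3" and nz: "\<exists>k<5. e k \<noteq> 0"
    have ez: "e (3) = 0" "e (4) = 0" "e (0) = 0" using z by (simp_all add: zw_def)
    consider (p) "e (Suc 0) \<noteq> 0" "e (2) \<noteq> 0" | (s3) "e (Suc 0) = 0" "e (2) \<noteq> 0"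
      | (s4) "e (Suc 0) \<noteq> 0" "e (2) = 0" | (n) "e (Suc 0) = 0" "e (2) = 0" by blast
    then show "\<exists>F. goodF a b c e F"
    proof cases
      case p show ?thesis
        by (rule pair_case[where qa="3" and qb="4" and qc="0"]) (use ez p in \<open>simp_all add: all5 zw_def\<close>)
    next
      case s3 show ?thesis
        by (rule single_case[where qa="3" and qb="4" and qc="0" and qd="Suc 0"]) (use ez s3 in \<open>simp_all add: all5 zw_def\<close>)
    next
      case s4 show ?thesis
        by (rule single_case[where qa="2" and qb="3" and qc="4" and qd="0"]) (use ez s4 in \<open>simp_all add: all5 zw_def\<close>)
    next
      case n then show ?thesis using nz ez by (simp add: ex5)
    qed
  next
    assume z: "zw e 4" and nz: "\<exists>k<5. e k \<noteq> 0"
    have ez: "e (4) = 0" "e (0) = 0" "e (Suc 0) = 0" using z by (simp_all add: zw_def)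
    consider (p) "e (2) \<noteq> 0" "e (3) \<noteq> 0" | (s3) "e (2) = 0" "e (3) \<noteq> 0"
      | (s4) "e (2) \<noteq> 0" "e (3) = 0" | (n) "e (2) = 0" "e (3) = 0" by blast
    then show "\<exists>F. goodF a b c e F"
    proof cases
      case p show ?thesis
        by (rule pair_case[where qa="4" and qb="0" and qc="Suc 0"]) (use ez p in \<open>simp_all add: all5 zw_def\<close>)
    next
      case s3 show ?thesis
        by (rule single_case[where qa="4" and qb="0" and qc="Suc 0" and qd="2"]) (use ez s3 in \<open>simp_all add: all5 zw_def\<close>)
    next
      case s4 show ?thesis
        by (rule single_case[where qa="3" and qb="4" and qc="0" and qd="Suc 0"]) (use ez s4 in \<open>simp_all add: all5 zw_def\<close>)
    next
      case n then show ?thesis using nz ez by (simp add: ex5)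
    qed
  qed
  then show ?thesis using j0 assms by blast
qed

theorem theorem2p7:
  shows "zariski_closure Z_Horn = {X \<in> W. det (hadamard Horn X) = 0}"
proof
  show "zariski_closure Z_Horn \<subseteq> {X \<in> W. det (hadamard Horn X) = 0}" by (rule closure_sub)
  show "{X \<in> W. det (hadamard Horn X) = 0} \<subseteq> zariski_closure Z_Horn"
  proof
    fix X assume X: "X \<in> {X \<in> W. det (hadamard Horn X) = 0}"
    then have inW: "inW X" and dt: "det (hadamard Horn X) = 0" by (auto simp: W_def)
    define a where "a = (\<lambda>j. X$$(j,j))"
    define b where "b = (\<lambda>j. X$$(s1 j,j))"
    define c where "c = (\<lambda>j. X$$(s2 j,j))"
    have XX: "X = Xof a b c" using W_eq_Xof[OF inW] unfolding a_def b_def c_def .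
    obtain e where e: "\<exists>k<5. e k \<noteq> 0" "\<forall>j<5. ceq a b c e j" using dt unfolding XX det_Xof by blast
    obtain F where F: "goodF a b c e F" using exF[OF e(1)] by blast
    show "X \<in> zariski_closure Z_Horn" unfolding zariski_closure_def XX
      using lemmaII[OF _ _ e(2) F] by blast
  qed
qed

end
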